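(* Let $p$ be a prime, $m\ge1$ with $p>m$, and $1\le k\le m$. Let $E_k(x)=\exp\big(\sum_{i=0}^k\frac{x^{p^i}}{p^i}\big)=\sum_{i\ge0}u_{ki}x^i$, let $\pi_k\in\mathbb{C}_p$ be a root of $\sum_{i=0}^k\frac{x^{p^i}}{p^i}=0$ with $\mathrm{ord}_p\,\pi_k=\frac{1}{p^{k-1}(p-1)}$, and let $\theta_k(x)=E_k(\pi_kx)=\sum_{i\ge0}\theta_{ki}x^i$. Then $\mathrm{ord}_p\,\theta_{ki}\ge i\cdot\frac{p-k}{p^{k+1}}$ for all $i\ge0$.
   Context: $\mathrm{ord}_p$ is the $p$-adic valuation on $\mathbb{C}_p$ normalized by $\mathrm{ord}_p(p)=1$. *)

theory Defs
  imports "HOL-Computational_Algebra.Formal_Power_Series" "HOL-Library.Extended_Real"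
begin

text \<open>A (rank one, real-valued) non-archimedean valuation on a field 'a of characteristic 0,
  normalised by v(p) = 1, with v(0) = infinity.  C_p with ord_p is an instance.\<close>
definition p_valuation :: "nat \<Rightarrow> ('a::field_char_0 \<Rightarrow> ereal) \<Rightarrow> bool" where
  "p_valuation p v \<longleftrightarrow>
     (\<forall>x. v x = \<infinity> \<longleftrightarrow> x = 0) \<and>
     (\<forall>x. v x \<noteq> - \<infinity>) \<and>
     (\<forall>x y. v (x * y) = v x + v y) \<and>
     (\<forall>x y. min (v x) (v y) \<le> v (x + y)) \<and>
     v (of_nat p) = 1"

definition AH_series :: "nat \<Rightarrow> nat \<Rightarrow> 'a::field_char_0 fps" where
  "AH_series p k = (\<Sum>i\<le>k. fps_const (1 / of_nat (p ^ i)) * fps_X ^ (p ^ i))"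

definition E_series :: "nat \<Rightarrow> nat \<Rightarrow> 'a::field_char_0 fps" where
  "E_series p k = fps_exp 1 oo AH_series p k"

definition theta_series :: "nat \<Rightarrow> nat \<Rightarrow> 'a::field_char_0 \<Rightarrow> 'a fps" where
  "theta_series p k \<pi> = E_series p k oo (fps_const \<pi> * fps_X)"

end

theory Submission
  imports Defs "HOL-Number_Theory.Residues"
begin


definition Exf :: "'a::field_char_0 fps \<Rightarrow> 'a fps" where "Exf B = fps_exp 1 oo B"

definition tt :: "nat \<Rightarrow> nat \<Rightarrow> 'a::field_char_0 fps" where
  "tt p i = fps_const (1 / of_nat (p ^ i)) * fps_X ^ (p ^ i)"

lemma ode_unique:
  fixes H K D :: "'a::field_char_0 fps"
  assumes "(fps_nth H 0) = (fps_nth K 0)" "fps_deriv H = D * H" "fps_deriv K = D * K"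
  shows "H = K"
proof -
  define G where "G = H - K"
  have G0: "(fps_nth G 0) = 0" using assms(1) unfolding G_def by simp
  have Gd: "fps_deriv G = D * G" unfolding G_def using assms(2,3) by (simp add: algebra_simps)
  have "\<forall>m<n. (fps_nth G m) = 0" for n
  proof (induction n)
    case 0 then show ?case by simp
  next
    case (Suc n)
    have "(fps_nth G n) = 0"
    proof (cases n)
      case 0 then show ?thesis using G0 by simp
    next
      case (Suc m)
      have "(fps_nth (D * G) m) = 0" unfolding fps_mult_nth
        using Suc.IH Suc by (intro sum.neutral) auto
      moreover have "fps_nth (fps_deriv G) m = of_nat (m + 1) * fps_nth G (Suc m)"
        by (simp add: fps_deriv_nth)
      ultimately have "of_nat (m + 1) * fps_nth G (Suc m) = 0" using Gd by simp
      moreover have "(of_nat (m + 1) :: 'a) \<noteq> 0" by (metis Suc_eq_plus1 of_nat_neq_0)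
      ultimately show ?thesis using Suc by simp
    qed
    then show ?case using Suc.IH less_Suc_eq by auto
  qed
  then have "\<And>n. fps_nth G n = 0" using lessI by blast
  then have "G = 0" by (simp add: fps_eq_iff)
  then show ?thesis unfolding G_def by simp
qed

lemma Ex_0_nth[simp]: "fps_nth (Exf B) 0 = 1" unfolding Exf_def by simp

lemma Ex_deriv: "(fps_nth B 0) = 0 \<Longrightarrow> fps_deriv (Exf B) = fps_deriv B * Exf B"
  unfolding Exf_def by (simp add: fps_compose_deriv mult.commute)

lemma Ex_add:
  assumes "(fps_nth B 0) = 0" "(fps_nth C 0) = 0"
  shows "Exf (B + C) = Exf B * Exf C"
proof (rule ode_unique[where D = "fps_deriv B + fps_deriv C"])
  show "fps_deriv (Exf (B + C)) = (fps_deriv B + fps_deriv C) * Exf (B + C)"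
    using Ex_deriv[of "B + C"] assms by simp
  show "fps_deriv (Exf B * Exf C) = (fps_deriv B + fps_deriv C) * (Exf B * Exf C)"
    using Ex_deriv[of B] Ex_deriv[of C] assms by (simp add: algebra_simps)
qed (simp add: fps_mult_nth)

lemma Ex_zero[simp]: "Exf 0 = 1" unfolding Exf_def by simp

lemma Ex_sum:
  assumes "\<And>i. i \<in> S \<Longrightarrow> fps_nth (f i) 0 = 0"
  shows "Exf (sum f S) = (\<Prod>i\<in>S. Exf (f i))"
  using assms
proof (induction S rule: infinite_finite_induct)
  case (insert x F)
  have "fps_nth (sum f F) 0 = 0" using insert by (simp add: fps_sum_nth)
  then show ?case using insert by (simp add: Ex_add)
qed auto

lemma Xpow_nth_0: "q \<ge> 1 \<Longrightarrow> (fps_nth (fps_X ^ q :: 'a::comm_ring_1 fps) 0) = 0"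
  by simp

lemma compose_Xpow_nth:
  fixes f :: "'a::field_char_0 fps"
  assumes q: "q \<ge> 1"
  shows "(fps_nth (f oo fps_X ^ q) n) = (if q dvd n then (fps_nth f (n div q)) else 0)"
proof -
  have "(fps_nth (f oo fps_X ^ q) n) = (\<Sum>i = 0..n. (fps_nth f i) * (if n = q * i then 1 else 0))"
    unfolding fps_compose_nth by (simp add: power_mult[symmetric] fps_X_power_nth)
  also have "\<dots> = (\<Sum>i \<in> (if q dvd n then {n div q} else {}). (fps_nth f i))"
  proof (cases "q dvd n")
    case True
    then obtain c where c: "n = q * c" by blast
    have cn: "c \<le> n" using q c by simp
    have "(\<Sum>i = 0..n. (fps_nth f i) * (if n = q * i then 1 else 0)) = (\<Sum>i\<in>{c}. (fps_nth f i))"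
      using cn q c by (intro sum.mono_neutral_cong_right) auto
    then show ?thesis using True c q by simp
  next
    case False
    have "(\<Sum>i = 0..n. (fps_nth f i) * (if n = q * i then 1 else 0)) = 0"
    proof (intro sum.neutral ballI)
      fix i assume "i \<in> {0..n}"
      show "fps_nth f i * (if n = q * i then 1 else 0) = 0"
      proof (cases "n = q * i")
        case True then have "q dvd n" by simp
        with False show ?thesis by simp
      qed simp
    qed
    then show ?thesis using False by simp
  qed
  also have "\<dots> = (if q dvd n then (fps_nth f (n div q)) else 0)" by simp
  finally show ?thesis .
qed

lemma Xpow_compose: "b \<ge> 1 \<Longrightarrow> (fps_X ^ a oo fps_X ^ b :: 'a::field_char_0 fps) = fps_X ^ (a * b)"
proof -
  assume b: "b \<ge> 1"
  have "fps_nth (fps_X ^ b :: 'a fps) 0 = 0" using b by simp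
  then have "(fps_X ^ a oo fps_X ^ b :: 'a fps) = (fps_X ^ b) ^ a" by (rule fps_X_power_compose)
  also have "\<dots> = fps_X ^ (a * b)" by (simp add: power_mult[symmetric] mult.commute)
  finally show ?thesis .
qed

lemma Ex_monom:
  assumes q: "q \<ge> 1"
  shows "Exf (fps_const c * fps_X ^ q :: 'a::field_char_0 fps) = fps_exp c oo fps_X ^ q"
proof -
  have "fps_const c * fps_X ^ q = (fps_const c * fps_X) oo (fps_X ^ q :: 'a fps)"
    using q by (simp add: fps_const_mult_apply_left[symmetric])
  then have "Exf (fps_const c * fps_X ^ q) = fps_exp 1 oo ((fps_const c * fps_X) oo fps_X ^ q)"
    unfolding Exf_def by simp
  also have "\<dots> = (fps_exp 1 oo (fps_const c * fps_X)) oo fps_X ^ q"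
    using q by (intro fps_compose_assoc) simp_all
  also have "\<dots> = fps_exp c oo fps_X ^ q" by simp
  finally show ?thesis .
qed

lemma E_prod: "E_series p k = (\<Prod>i\<le>k. Exf (tt p i) :: 'a::field_char_0 fps)"
proof -
  have "E_series p k = Exf (\<Sum>i\<le>k. tt p i :: 'a fps)"
    unfolding E_series_def AH_series_def Exf_def tt_def ..
  also have "\<dots> = (\<Prod>i\<le>k. Exf (tt p i))"
    by (rule Ex_sum) (simp add: tt_def)
  finally show ?thesis .
qed

lemma Ex_tt: "p \<ge> 1 \<Longrightarrow> Exf (tt p i) = (fps_exp (1 / of_nat (p ^ i)) oo fps_X ^ (p ^ i) :: 'a::field_char_0 fps)"
  unfolding tt_def by (rule Ex_monom) simp




lemma Ex_tt_pow:
  assumes p: "p \<ge> 1"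
  shows "Exf (tt p (Suc i)) ^ p = (fps_exp (1 / of_nat (p ^ i)) oo fps_X ^ (p ^ Suc i) :: 'a::field_char_0 fps)"
proof -
  have "Exf (tt p (Suc i)) ^ p = (fps_exp (1 / of_nat (p ^ Suc i)) oo fps_X ^ (p ^ Suc i) :: 'a fps) ^ p"
    by (simp only: Ex_tt[OF p])
  also have "\<dots> = fps_exp (1 / of_nat (p ^ Suc i)) ^ p oo fps_X ^ (p ^ Suc i)"
    using p by (intro fps_compose_power) simp
  also have "\<dots> = fps_exp (of_nat p * (1 / of_nat (p ^ Suc i))) oo fps_X ^ (p ^ Suc i)"
    by (simp add: fps_exp_power_mult)
  also have "of_nat p * (1 / of_nat (p ^ Suc i)) = (1 / of_nat (p ^ i) :: 'a)"
    using p by (simp add: field_simps)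
  finally show ?thesis .
qed

lemma Ex_tt_compose:
  assumes p: "p \<ge> 1"
  shows "Exf (tt p i) oo fps_X ^ p = (Exf (tt p (Suc i)) ^ p :: 'a::field_char_0 fps)"
proof -
  have "Exf (tt p i) oo fps_X ^ p = ((fps_exp (1 / of_nat (p ^ i)) oo fps_X ^ (p ^ i)) oo fps_X ^ p :: 'a fps)"
    by (simp only: Ex_tt[OF p])
  also have "\<dots> = fps_exp (1 / of_nat (p ^ i)) oo (fps_X ^ (p ^ i) oo fps_X ^ p)"
    using p by (intro fps_compose_assoc[symmetric]) simp_all
  also have "fps_X ^ (p ^ i) oo fps_X ^ p = (fps_X ^ (p ^ Suc i) :: 'a fps)"
    using p Xpow_compose[of p "p ^ i"] by (simp add: mult.commute)
  finally have A: "Exf (tt p i) oo fps_X ^ p = (fps_exp (1 / of_nat (p ^ i)) oo fps_X ^ (p ^ Suc i) :: 'a fps)" .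
  show ?thesis unfolding Ex_tt_pow[OF p] by (rule A)
qed

lemma Ex_tt_0: "Exf (tt p 0) = (fps_exp 1 :: 'a::field_char_0 fps)"
  unfolding Exf_def tt_def by simp

lemma dwork_identity:
  assumes p: "p \<ge> 1"
  shows "(E_series p N oo fps_X ^ p) * fps_exp (of_nat p) =
         E_series p N ^ p * Exf (tt p (Suc N)) ^ p"
proof -
  have X0: "fps_nth (fps_X ^ p :: 'a fps) 0 = 0" using p by simp
  have "E_series p N oo fps_X ^ p = (\<Prod>i\<le>N. Exf (tt p i) oo fps_X ^ p :: 'a fps)"
    unfolding E_prod by (rule fps_compose_prod_distrib[OF X0])
  also have "\<dots> = (\<Prod>i\<le>N. Exf (tt p (Suc i)) ^ p)" by (rule prod.cong[OF refl]) (rule Ex_tt_compose[OF p])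
  also have "\<dots> = (\<Prod>i\<le>N. Exf (tt p (Suc i))) ^ p" by (rule prod_power_distrib[symmetric])
  finally have L: "E_series p N oo fps_X ^ p = (\<Prod>i\<le>N. Exf (tt p (Suc i)) :: 'a fps) ^ p" .
  have "E_series p N ^ p * Exf (tt p (Suc N)) ^ p = (E_series p N * Exf (tt p (Suc N)) :: 'a fps) ^ p"
    by (simp add: power_mult_distrib)
  also have "E_series p N * Exf (tt p (Suc N)) = (\<Prod>i\<le>Suc N. Exf (tt p i) :: 'a fps)"
    unfolding E_prod by simp
  also have "\<dots> = Exf (tt p 0) * (\<Prod>i\<le>N. Exf (tt p (Suc i)))"
    by (rule prod.atMost_Suc_shift)
  also have "(Exf (tt p 0) * (\<Prod>i\<le>N. Exf (tt p (Suc i)))) ^ p =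
      fps_exp (of_nat p) * (E_series p N oo fps_X ^ p :: 'a fps)"
    unfolding L Ex_tt_0 power_mult_distrib fps_exp_power_mult by simp
  finally show ?thesis by (simp add: mult.commute)
qed

lemma R_nth:
  assumes p: "p \<ge> 1" and j: "0 < j" "j < p ^ Suc N"
  shows "fps_nth (Exf (tt p (Suc N)) ^ p :: 'a::field_char_0 fps) j = 0"
proof -
  have "\<not> p ^ Suc N dvd j" using j by (meson nat_dvd_not_less)
  moreover have "p ^ Suc N \<ge> 1" using p by simp
  ultimately show ?thesis unfolding Ex_tt_pow[OF p] by (simp add: compose_Xpow_nth)
qed

lemma R_nth0: "fps_nth (Exf B ^ p) 0 = 1"
  by (simp add: fps_nth_power_0)

lemma E_split:
  assumes p: "p \<ge> 1" and kN: "k \<le> N"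
  shows "E_series p k = (E_series p N * (\<Prod>i\<in>{k<..N}. Exf (- tt p i)) :: 'a::field_char_0 fps)"
proof -
  have U: "{..N} = {..k} \<union> {k<..N}" using kN by auto
  have EN: "E_series p N = (E_series p k * (\<Prod>i\<in>{k<..N}. Exf (tt p i)) :: 'a fps)"
    unfolding E_prod U by (rule prod.union_disjoint) auto
  have inv: "Exf (tt p i) * Exf (- tt p i) = (1 :: 'a fps)" for i
  proof -
    have "Exf (tt p i + - tt p i) = (Exf (tt p i) * Exf (- tt p i) :: 'a fps)"
      by (rule Ex_add) (simp_all add: tt_def)
    then show ?thesis by simp
  qed
  have "E_series p N * (\<Prod>i\<in>{k<..N}. Exf (- tt p i)) =
        E_series p k * (\<Prod>i\<in>{k<..N}. Exf (tt p i) * Exf (- tt p i) :: 'a fps)"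
    unfolding EN prod.distrib by (simp add: mult.assoc)
  also have "\<dots> = E_series p k" using inv by simp
  finally show ?thesis by simp
qed

lemma Ex_negtt_nth:
  assumes p: "p \<ge> 1"
  shows "fps_nth (Exf (- tt p i) :: 'a::field_char_0 fps) n =
    (if p ^ i dvd n then (- (1 / of_nat (p ^ i))) ^ (n div p ^ i) / of_nat (fact (n div p ^ i)) else 0)"
proof -
  have "- tt p i = (fps_const (- (1 / of_nat (p ^ i))) * fps_X ^ (p ^ i) :: 'a fps)"
    unfolding tt_def fps_const_neg[symmetric] by (simp only: minus_mult_left)
  then have "Exf (- tt p i) = (fps_exp (- (1 / of_nat (p ^ i))) oo fps_X ^ (p ^ i) :: 'a fps)"
    using Ex_monom[of "p ^ i"] p by simp
  moreover have "p ^ i \<ge> 1" using p by simp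
  ultimately show ?thesis using compose_Xpow_nth[of "p ^ i" "fps_exp (- (1 / of_nat (p ^ i))) :: 'a fps" n]
    by (simp only: fps_exp_nth)
qed

definition RQ :: "'a::field_char_0 fps \<Rightarrow> bool" where "RQ f \<longleftrightarrow> (\<forall>n. fps_nth f n \<in> \<rat>)"

lemma RQ_mult: "RQ f \<Longrightarrow> RQ g \<Longrightarrow> RQ (f * g)"
  unfolding RQ_def fps_mult_nth by (intro allI Rats_sum) (simp add: Rats_mult)

lemma RQ_1: "RQ 1" unfolding RQ_def by (simp add: fps_one_nth)

lemma RQ_power: "RQ f \<Longrightarrow> RQ (f ^ i)"
  by (induction i) (simp_all add: RQ_1 RQ_mult)

lemma RQ_AH: "RQ (AH_series p k :: 'a::field_char_0 fps)"
  unfolding RQ_def AH_series_def fps_sum_nth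
  by (intro allI Rats_sum) (simp add: fps_X_power_nth)

lemma E_rat: "fps_nth (E_series p k :: 'a::field_char_0 fps) n \<in> \<rat>"
proof -
  have "fps_nth (E_series p k :: 'a fps) n =
        (\<Sum>i = 0..n. fps_nth (fps_exp 1) i * fps_nth (AH_series p k ^ i) n)"
    unfolding E_series_def fps_compose_nth ..
  also have "\<dots> \<in> \<rat>"
  proof (intro Rats_sum Rats_mult)
    fix i
    show "fps_nth (AH_series p k ^ i :: 'a fps) n \<in> \<rat>"
      using RQ_power[OF RQ_AH] unfolding RQ_def by blast
    have "(1 / fact i :: 'a) \<in> \<rat>" by (metis Rats_1 Rats_divide Rats_of_nat of_nat_fact)
    then show "fps_nth (fps_exp 1 :: 'a fps) i \<in> \<rat>" by simp
  qed
  finally show ?thesis .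
qed




locale pval =
  fixes p :: nat and v :: "'a::field_char_0 \<Rightarrow> ereal"
  assumes val: "p_valuation p v" and pp: "prime p"
begin

lemma v_inf: "v x = \<infinity> \<longleftrightarrow> x = 0" using val unfolding p_valuation_def by blast
lemma v_ninf: "v x \<noteq> - \<infinity>" using val unfolding p_valuation_def by blast
lemma v_mult: "v (x * y) = v x + v y" using val unfolding p_valuation_def by blast
lemma v_add: "min (v x) (v y) \<le> v (x + y)" using val unfolding p_valuation_def by blast
lemma v_p: "v (of_nat p) = 1" using val unfolding p_valuation_def by blast

lemma v_fin: "x \<noteq> 0 \<Longrightarrow> \<bar>v x\<bar> \<noteq> \<infinity>"
  using v_inf v_ninf by (cases "v x") auto

lemma v_1: "v 1 = 0"
proof -
  have "v 1 = v 1 + v 1" using v_mult[of 1 1] by simp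
  moreover have "\<bar>v 1\<bar> \<noteq> \<infinity>" using v_fin by simp
  ultimately show ?thesis by (cases "v 1") auto
qed

lemma v_m1: "v (-1) = 0"
proof -
  have "v (-1) + v (-1) = 0" using v_mult[of "-1" "-1"] v_1 by simp
  moreover have "\<bar>v (-1)\<bar> \<noteq> \<infinity>" using v_fin by simp
  ultimately show ?thesis by (cases "v (-1)") auto
qed

lemma v_uminus: "v (- x) = v x"
  using v_mult[of "-1" x] v_m1 by simp

lemma v_inverse: "x \<noteq> 0 \<Longrightarrow> v (inverse x) = - v x"
proof -
  assume x: "x \<noteq> 0"
  have "v x + v (inverse x) = 0" using v_mult[of x "inverse x"] x v_1 by simp
  moreover have "\<bar>v x\<bar> \<noteq> \<infinity>" "\<bar>v (inverse x)\<bar> \<noteq> \<infinity>" using v_fin x by auto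
  ultimately show ?thesis by (cases "v x"; cases "v (inverse x)") auto
qed

lemma v_power: "v (x ^ n) = ereal (real n) * v x"
proof (induction n)
  case 0 then show ?case using v_1 by (simp flip: zero_ereal_def)
next
  case (Suc n)
  have "v (x ^ Suc n) = v x + v (x^n)" by (simp add: v_mult)
  also have "\<dots> = v x + ereal (real n) * v x" using Suc by simp
  also have "\<dots> = ereal (real (Suc n)) * v x"
    by (cases "v x") (auto simp: algebra_simps)
  finally show ?case .
qed

definition vge :: "'a \<Rightarrow> real \<Rightarrow> bool" where "vge x r \<longleftrightarrow> ereal r \<le> v x"

lemma vge_0[simp]: "vge 0 r" unfolding vge_def using v_inf[of 0] by simp

lemma vge_mult: "vge x r \<Longrightarrow> vge y s \<Longrightarrow> vge (x * y) (r + s)"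
  unfolding vge_def v_mult by (metis add_mono plus_ereal.simps(1))

lemma vge_add: "vge x r \<Longrightarrow> vge y r \<Longrightarrow> vge (x + y) r"
  unfolding vge_def using v_add[of x y] by (meson min.bounded_iff order_trans)

lemma vge_mono: "vge x r \<Longrightarrow> s \<le> r \<Longrightarrow> vge x s"
  unfolding vge_def by (meson ereal_less_eq(3) order_trans)

lemma vge_uminus: "vge (- x) r = vge x r"
  unfolding vge_def v_uminus ..

lemma vge_diff: "vge x r \<Longrightarrow> vge y r \<Longrightarrow> vge (x - y) r"
  using vge_add[of x r "- y"] vge_uminus by simp

lemma vge_sum: "(\<And>i. i \<in> S \<Longrightarrow> vge (f i) r) \<Longrightarrow> vge (sum f S) r"
proof (induction S rule: infinite_finite_induct)
  case (insert x F) then show ?case by (simp add: vge_add)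
qed auto

lemma vge_1: "vge 1 0" unfolding vge_def v_1 by simp

lemma vge_power: "vge x r \<Longrightarrow> vge (x ^ n) (real n * r)"
proof (induction n)
  case 0 then show ?case using vge_1 by simp
next
  case (Suc n)
  then have "vge (x * x^n) (r + real n * r)" using vge_mult by blast
  then show ?case by (simp add: algebra_simps)
qed

lemma vge_of_nat: "vge (of_nat n) 0"
proof (induction n)
  case (Suc n) then show ?case using vge_add[OF vge_1 Suc] by simp
qed simp

lemma vge_of_int: "vge (of_int n) 0"
proof (cases "n \<ge> 0")
  case True then show ?thesis using vge_of_nat[of "nat n"] by simp
next
  case False
  then have "of_int n = - (of_nat (nat (- n)) :: 'a)" by simp
  then show ?thesis using vge_of_nat[of "nat (- n)"] vge_uminus by metis
qed

lemma vge_p: "vge (of_nat p) 1" unfolding vge_def v_p by simp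

lemma v_real: assumes "x \<noteq> 0" obtains e where "v x = ereal e"
  using v_fin[OF assms] by (cases "v x") auto

lemma vge_ereal: "v x = ereal e \<Longrightarrow> vge x r \<longleftrightarrow> r \<le> e"
  unfolding vge_def by simp

lemma not_vge_1: "r > 0 \<Longrightarrow> \<not> vge 1 r"
  unfolding vge_def v_1 by (metis ereal_less_eq(3) zero_ereal_def not_le)

lemma v_coprime: assumes "\<not> int p dvd n" shows "v (of_int n) = 0"
proof -
  have "coprime (int p) n" using assms pp
    by (simp add: prime_imp_coprime_int)
  then have "gcd (int p) n = 1" by simp
  then obtain a b where ab: "a * int p + b * n = 1"
    using bezout_int[of "int p" n] by metis
  have "n \<noteq> 0" using assms by auto
  then have "(of_int n :: 'a) \<noteq> 0" by simp
  then obtain e where e: "v (of_int n) = ereal e" by (rule v_real)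
  have e0: "0 \<le> e" using vge_of_int[of n] vge_ereal[OF e] by simp
  show ?thesis
  proof (rule ccontr)
    assume "v (of_int n) \<noteq> 0"
    then have "e \<noteq> 0" using e by (metis zero_ereal_def)
    then have pos: "0 < e" using e0 by simp
    define d where "d = min e 1"
    have d: "0 < d" "d \<le> e" "d \<le> 1" using pos unfolding d_def by auto
    have "vge (of_int (a * int p)) 1"
      using vge_mult[OF vge_of_int[of a] vge_p] by simp
    then have A: "vge (of_int (a * int p)) d" using vge_mono d by blast
    have "vge (of_int (b * n)) (0 + e)" unfolding of_int_mult
      using vge_mult[OF vge_of_int[of b]] vge_ereal[OF e] by simp
    then have B: "vge (of_int (b * n)) d" using vge_mono d by simp
    have "vge (of_int (a * int p) + of_int (b * n)) d" using vge_add[OF A B] .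
    then have "vge 1 d" using ab by (metis of_int_1 of_int_add)
    then show False using not_vge_1 d by blast
  qed
qed

end



lemma int_fermat:
  fixes a :: int assumes "prime p"
  shows "int p dvd a ^ p - a"
proof -
  define r where "r = nat (a mod int p)"
  have p0: "p > 0" using assms prime_gt_0_nat by blast
  have ra: "int r = a mod int p" unfolding r_def using p0 by simp
  have c1: "[a = int r] (mod int p)" unfolding ra cong_def by simp
  have nr: "[r ^ p = r] (mod p)"
  proof (cases "p dvd r")
    case True
    have "r dvd r ^ p" using p0 by (intro dvd_power) simp
    then have "p dvd r ^ p" using True by (rule dvd_trans[rotated])
    then have "r ^ p mod p = 0" "r mod p = 0" using True by simp_all
    then show ?thesis unfolding cong_def by simp
  next
    case False
    have "[r ^ (p - 1) = 1] (mod p)" by (rule fermat_theorem[OF assms False])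
    then have "[r ^ (p - 1) * r = 1 * r] (mod p)" by (rule cong_mult) (rule cong_refl)
    moreover have "r ^ (p - 1) * r = r ^ p" using p0
      by (metis Suc_diff_1 power_Suc2)
    ultimately show ?thesis by simp
  qed
  then have "[int r ^ p = int r] (mod int p)"
    by (metis cong_int_iff of_nat_power)
  moreover have "[a ^ p = int r ^ p] (mod int p)" using c1 by (rule cong_pow)
  ultimately have "[a ^ p = a] (mod int p)"
    using c1 by (meson cong_sym cong_trans)
  then show ?thesis by (simp add: cong_iff_dvd_diff)
qed

context pval
begin

lemma p2: "p \<ge> 2" using pp prime_ge_2_nat by blast

lemma v_inv_ereal: "v x = ereal e \<Longrightarrow> v (inverse x) = ereal (- e)"
proof -
  assume e: "v x = ereal e"
  have "v 0 = \<infinity>" using v_inf[of 0] by simp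
  then have "x \<noteq> 0" using e by auto
  then show ?thesis using v_inverse e by simp
qed

lemma vge_dvd: "int p dvd n \<Longrightarrow> vge (of_int n) 1"
proof -
  assume "int p dvd n"
  then obtain m where "n = int p * m" by blast
  then show ?thesis using vge_mult[OF vge_p vge_of_int[of m]] by simp
qed

lemma v_of_nat_coprime: "\<not> p dvd r \<Longrightarrow> v (of_nat r) = 0"
  using v_coprime[of "int r"] by simp

lemma v_p_power: "v (of_nat p ^ e) = ereal (real e)"
  using v_power[of "of_nat p" e] v_p by simp

lemma fact_decomp:
  "\<exists>r. fact n = p ^ (n div p) * fact (n div p) * r \<and> \<not> p dvd r"
proof (induction n)
  case 0
  have "\<not> p dvd 1" using p2 by auto
  then show ?case by (intro exI[of _ 1]) simp
next
  case (Suc n)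
  then obtain r where r: "fact n = p ^ (n div p) * fact (n div p) * r" "\<not> p dvd r" by blast
  define q where "q = n div p"
  show ?case
  proof (cases "Suc n mod p = 0")
    case True
    have sd: "Suc n div p = Suc q" using True div_Suc[of n p] unfolding q_def by simp
    have sn: "Suc n = p * Suc q" using True sd
      using div_mult_mod_eq[of "Suc n" p] by (simp add: mult.commute)
    have "fact (Suc n) = Suc n * fact n" by simp
    also have "\<dots> = (p * Suc q) * (p ^ q * fact q * r)" unfolding sn r(1) q_def ..
    also have "\<dots> = p ^ Suc q * (Suc q * fact q) * r" by (simp only: power_Suc ac_simps)
    also have "Suc q * fact q = (fact (Suc q) :: nat)" by simp
    finally show ?thesis using sd r(2) by auto
  next
    case False
    have sd: "Suc n div p = q" using False div_Suc[of n p] unfolding q_def by simp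
    have "fact (Suc n) = p ^ q * fact q * (Suc n * r)" unfolding fact_Suc r(1) q_def
      by (simp only: ac_simps of_nat_id)
    moreover have "\<not> p dvd Suc n * r" using False r(2) pp prime_dvd_mult_iff
      by (metis dvd_eq_mod_eq_0)
    ultimately show ?thesis using sd by metis
  qed
qed

lemma v_fact: "n \<ge> 1 \<Longrightarrow> \<exists>e::nat. v (of_nat (fact n)) = ereal (real e) \<and> real e * (real p - 1) \<le> real n - 1"
proof (induction n rule: less_induct)
  case (less n)
  obtain r where r: "fact n = p ^ (n div p) * fact (n div p) * r" "\<not> p dvd r"
    using fact_decomp by blast
  define q where "q = n div p"
  have vr: "v (of_nat r) = 0" using v_of_nat_coprime r(2) .
  have vn: "v (of_nat (fact n)) = ereal (real q) + v (of_nat (fact q))"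
    unfolding r(1) q_def[symmetric] of_nat_mult v_mult vr of_nat_power v_p_power by simp
  show ?case
  proof (cases "q = 0")
    case True
    then show ?thesis using vn v_1 less.prems by (intro exI[of _ 0]) (simp add: zero_ereal_def)
  next
    case False
    then have q1: "q \<ge> 1" by simp
    have "q < n" unfolding q_def using less.prems p2 by simp
    then obtain e where e: "v (of_nat (fact q)) = ereal (real e)" "real e * (real p - 1) \<le> real q - 1"
      using less.IH q1 by blast
    have pq: "real p * real q \<le> real n"
    proof -
      have "p * q \<le> n" unfolding q_def by (simp add: mult.commute)
      then show ?thesis by (metis of_nat_le_iff of_nat_mult)
    qed
    have "real (q + e) * (real p - 1) \<le> real n - 1"
      using e(2) pq p2 by (simp add: algebra_simps)
    moreover have "v (of_nat (fact n)) = ereal (real (q + e))" using vn e(1) by simp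
    ultimately show ?thesis by blast
  qed
qed

lemma vge_pfact: "j \<ge> 1 \<Longrightarrow> vge (of_nat p ^ j / of_nat (fact j)) 1"
proof -
  assume j: "j \<ge> 1"
  obtain e where e: "v (of_nat (fact j)) = ereal (real e)" "real e * (real p - 1) \<le> real j - 1"
    using v_fact[OF j] by blast
  have "1 \<le> real p - 1" using p2 by simp
  then have "real e * 1 \<le> real e * (real p - 1)" by (intro mult_left_mono) simp_all
  then have "real e \<le> real e * (real p - 1)" by simp
  then have "real e \<le> real j - 1" using e(2) by linarith
  have "v (of_nat p ^ j / of_nat (fact j)) = ereal (real j) + ereal (- real e)"
    unfolding divide_inverse v_mult v_p_power v_inv_ereal[OF e(1)] ..
  then show ?thesis unfolding vge_def using \<open>real e \<le> real j - 1\<close> by simp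
qed

lemma vge_invfact: "vge (1 / of_nat (fact t)) (- (real t / (real p - 1)))"
proof (cases "t = 0")
  case True then show ?thesis using vge_1 by simp
next
  case False
  then obtain e where e: "v (of_nat (fact t)) = ereal (real e)" "real e * (real p - 1) \<le> real t - 1"
    using v_fact[of t] by auto
  have pp1: "real p - 1 > 0" using p2 by simp
  have "real e \<le> (real t - 1) / (real p - 1)" using e(2) pp1 by (simp add: field_simps)
  also have "\<dots> \<le> real t / (real p - 1)" using pp1 by (simp add: divide_right_mono)
  finally have le: "real e \<le> real t / (real p - 1)" .
  have "v (1 / of_nat (fact t)) = ereal (- real e)"
    unfolding divide_inverse v_mult v_1 v_inv_ereal[OF e(1)] by simp
  then show ?thesis unfolding vge_def using le by simp
qed

lemma rat_fermat: assumes q: "q \<in> \<rat>" and vq: "vge q 0" shows "vge (q ^ p - q) 1"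
proof -
  obtain a b where ab: "b > 0" "coprime a b" "q = of_int a / of_int b"
    using Rats_cases'[OF q] by metis
  have nb: "\<not> int p dvd b"
  proof
    assume pb: "int p dvd b"
    have "\<not> int p dvd a"
    proof
      assume "int p dvd a"
      then have "is_unit (int p)" using coprime_common_divisor ab(2) pb by blast
      then have "int p = 1" by simp
      then show False using p2 by simp
    qed
    then have va: "v (of_int a) = 0" by (rule v_coprime)
    have "b \<noteq> 0" using ab by simp
    then have "(of_int b :: 'a) \<noteq> 0" by simp
    then obtain e where e: "v (of_int b) = ereal e" by (rule v_real)
    have "1 \<le> e" using vge_dvd[OF pb] vge_ereal[OF e] by simp
    have "v q = ereal (- e)" unfolding ab(3) divide_inverse v_mult va v_inv_ereal[OF e] by simp
    then show False using vq \<open>1 \<le> e\<close> unfolding vge_def by simp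
  qed
  have vb: "v (of_int b) = 0" using v_coprime[OF nb] .
  have dv: "int p dvd a ^ p * b - a * b ^ p"
  proof -
    have "int p dvd (a ^ p - a) * b - a * (b ^ p - b)"
      using int_fermat[OF pp, of a] int_fermat[OF pp, of b] by (simp add: dvd_diff)
    then show ?thesis by (simp add: algebra_simps)
  qed
  have b0: "(of_int b :: 'a) \<noteq> 0" using ab by simp
  have eq: "q ^ p - q = of_int (a ^ p * b - a * b ^ p) * inverse (of_int b ^ (p + 1))"
    unfolding ab(3) using b0 by (simp add: field_simps power_divide)
  have "v (inverse (of_int b ^ (p + 1) :: 'a)) = 0"
    using v_inverse[of "of_int b ^ (p + 1)"] b0 v_power[of "of_int b" "p+1"] vb by simp
  then have "vge (inverse (of_int b ^ (p + 1) :: 'a)) 0" unfolding vge_def by (simp add: zero_ereal_def)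
  then have "vge (of_int (a ^ p * b - a * b ^ p) * inverse (of_int b ^ (p + 1) :: 'a)) (1 + 0)"
    by (rule vge_mult[OF vge_dvd[OF dv]])
  then show ?thesis unfolding eq by simp
qed

end



context pval
begin

definition CB :: "real \<Rightarrow> 'a fps \<Rightarrow> bool" where "CB r f \<longleftrightarrow> (\<forall>n. vge (fps_nth f n) r)"

lemma CB_mult: "CB r f \<Longrightarrow> CB s g \<Longrightarrow> CB (r + s) (f * g)"
  unfolding CB_def fps_mult_nth by (intro allI vge_sum) (simp add: vge_mult)

lemma CB_add: "CB r f \<Longrightarrow> CB r g \<Longrightarrow> CB r (f + g)"
  unfolding CB_def by (simp add: vge_add)

lemma CB_diff: "CB r f \<Longrightarrow> CB r g \<Longrightarrow> CB r (f - g)"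
  unfolding CB_def by (simp add: vge_diff)

lemma CB_0: "CB r 0" unfolding CB_def by simp

lemma CB_1: "CB 0 1" unfolding CB_def by (simp add: fps_one_nth vge_1)

lemma CB_mono: "CB r f \<Longrightarrow> s \<le> r \<Longrightarrow> CB s f"
  unfolding CB_def using vge_mono by blast

lemma CB_power: "CB 0 f \<Longrightarrow> CB 0 (f ^ i)"
proof (induction i)
  case 0 then show ?case using CB_1 by simp
next
  case (Suc i) then show ?case using CB_mult[of 0 f 0 "f ^ i"] by simp
qed

lemma CB_sum: "(\<And>i. i \<in> S \<Longrightarrow> CB r (f i)) \<Longrightarrow> CB r (sum f S)"
  unfolding CB_def fps_sum_nth by (intro allI vge_sum) blast

lemma CB_monom: "vge c r \<Longrightarrow> CB r (fps_const c * fps_X ^ m)"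
  unfolding CB_def by (simp add: fps_X_power_nth)

lemma CB_natmult: "p dvd m \<Longrightarrow> CB 0 f \<Longrightarrow> CB 1 (of_nat m * f)"
proof -
  assume m: "p dvd m" and f: "CB 0 f"
  have "vge (of_nat m :: 'a) 1" using vge_dvd[of "int m"] m by simp
  then have "CB 1 (fps_const (of_nat m) * f)"
    using f unfolding CB_def by (simp add: vge_mult[where s = 0, simplified])
  then show ?thesis by (simp add: fps_of_nat)
qed

lemma binom_middle:
  assumes A: "CB 0 A" and B: "CB 0 B"
  shows "CB 1 ((A + B) ^ p - A ^ p - B ^ p)"
proof -
  define g where "g k = of_nat (p choose k) * A ^ k * B ^ (p - k)" for k
  have p0: "p \<noteq> 0" using p2 by simp
  have "(A + B) ^ p = (\<Sum>k\<le>p. g k)" unfolding g_def by (rule binomial_ring)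
  also have "\<dots> = g p + (\<Sum>k\<in>{..p} - {p}. g k)" by (rule sum.remove) auto
  also have "(\<Sum>k\<in>{..p} - {p}. g k) = g 0 + (\<Sum>k\<in>{..p} - {p} - {0}. g k)"
    using p0 by (intro sum.remove) auto
  finally have eq: "(A + B) ^ p - A ^ p - B ^ p = (\<Sum>k\<in>{..p} - {p} - {0}. g k)"
    unfolding g_def by simp
  have "CB 1 (g k)" if k: "k \<in> {..p} - {p} - {0}" for k
  proof -
    have "p dvd (p choose k)" using k pp by (intro dvd_choose_prime) auto
    moreover have "CB 0 (A ^ k * B ^ (p - k))" using CB_mult[OF CB_power[OF A] CB_power[OF B]] by simp
    ultimately show ?thesis unfolding g_def using CB_natmult by (simp add: mult.assoc)
  qed
  then show ?thesis unfolding eq by (intro CB_sum)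
qed

definition Ptr :: "(nat \<Rightarrow> 'a) \<Rightarrow> nat \<Rightarrow> 'a fps" where
  "Ptr c m = (\<Sum>i<m. fps_const (c i) * fps_X ^ i)"

lemma Ptr_nth: "fps_nth (Ptr c m) j = (if j < m then c j else 0)"
proof -
  have "fps_nth (Ptr c m) j = (\<Sum>i<m. c i * (if j = i then 1 else 0))"
    unfolding Ptr_def fps_sum_nth by (simp add: fps_X_power_nth)
  also have "\<dots> = (\<Sum>i<m. if j = i then c i else 0)"
    by (intro sum.cong) auto
  also have "\<dots> = (if j < m then c j else 0)" by (simp add: sum.delta)
  finally show ?thesis .
qed

lemma frob:
  assumes "\<And>i. i < m \<Longrightarrow> c i \<in> \<rat> \<and> vge (c i) 0"
  shows "CB 1 (Ptr c m ^ p - (Ptr c m oo fps_X ^ p))"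
  using assms
proof (induction m)
  case 0
  have "p \<noteq> 0" using p2 by simp
  then show ?case unfolding Ptr_def by (simp add: CB_0 power_0_left)
next
  case (Suc m)
  define A where "A = Ptr c m"
  define B where "B = fps_const (c m) * (fps_X ^ m :: 'a fps)"
  have PS: "Ptr c (Suc m) = A + B" unfolding A_def B_def Ptr_def by simp
  have IH: "CB 1 (A ^ p - (A oo fps_X ^ p))" unfolding A_def using Suc by simp
  have cm: "c m \<in> \<rat>" "vge (c m) 0" using Suc.prems by auto
  have CA: "CB 0 A" unfolding CB_def A_def Ptr_nth using Suc.prems vge_0 by simp
  have CBB: "CB 0 B" unfolding B_def using cm(2) by (rule CB_monom)
  have X0: "fps_nth (fps_X ^ p :: 'a fps) 0 = 0" using p2 by simp
  have Bp: "B ^ p = fps_const (c m ^ p) * fps_X ^ (m * p)"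
    unfolding B_def by (simp add: power_mult_distrib fps_const_power power_mult)
  have Bc: "B oo fps_X ^ p = fps_const (c m) * fps_X ^ (m * p)"
  proof -
    have "B oo fps_X ^ p = fps_const (c m) * (fps_X ^ m oo fps_X ^ p)"
      unfolding B_def by (simp add: fps_const_mult_apply_left)
    also have "fps_X ^ m oo fps_X ^ p = (fps_X ^ (m * p) :: 'a fps)"
      using p2 by (intro Xpow_compose) simp
    finally show ?thesis .
  qed
  have "B ^ p - (B oo fps_X ^ p) = fps_const (c m ^ p - c m) * fps_X ^ (m * p)"
    unfolding Bp Bc by (simp only: fps_const_sub[symmetric] left_diff_distrib)
  then have CBd: "CB 1 (B ^ p - (B oo fps_X ^ p))"
    using CB_monom[OF rat_fermat[OF cm]] by simp
  have "Ptr c (Suc m) ^ p - (Ptr c (Suc m) oo fps_X ^ p) =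
    (A ^ p - (A oo fps_X ^ p)) + (B ^ p - (B oo fps_X ^ p)) + ((A + B) ^ p - A ^ p - B ^ p)"
    unfolding PS fps_compose_add_distrib by (simp add: algebra_simps)
  then show ?case using CB_add[OF CB_add[OF IH CBd] binom_middle[OF CA CBB]] by simp
qed

lemma vge_cancel_p: assumes "vge (of_nat p * x) (r + 1)" shows "vge x r"
proof -
  have "ereal (r + 1) \<le> 1 + v x" using assms unfolding vge_def v_mult v_p .
  then show ?thesis unfolding vge_def using v_ninf[of x]
    by (cases "v x") (auto simp: one_ereal_def)
qed

lemma sum_single_top:
  fixes f :: "nat \<Rightarrow> 'b::comm_monoid_add"
  assumes "\<And>j. j < n \<Longrightarrow> f j = 0"
  shows "(\<Sum>j=0..n. f j) = f n"
proof -
  have "(\<Sum>j=0..n. f j) = f n + (\<Sum>j\<in>{0..n} - {n}. f j)" by (rule sum.remove) auto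
  also have "(\<Sum>j\<in>{0..n} - {n}. f j) = 0" using assms by (intro sum.neutral) auto
  finally show ?thesis by simp
qed

lemma E_integral: "n < p ^ Suc N \<Longrightarrow> vge (fps_nth (E_series p N :: 'a fps) n) 0"
proof (induction n rule: less_induct)
  case (less n)
  define F where "F = (E_series p N :: 'a fps)"
  define a where "a = fps_nth F"
  have p1: "p \<ge> 1" using p2 by simp
  have F0: "a 0 = 1" unfolding a_def F_def E_series_def by simp
  show ?case
  proof (cases "n = 0")
    case True then show ?thesis using F0 vge_1 unfolding a_def F_def by simp
  next
    case False
    then have n0: "0 < n" by simp
    have IHa: "vge (a j) 0" if "j < n" for j
      using less.IH[of j] that less.prems unfolding a_def F_def by simp
    define T where "T = Ptr a n"
    have Tn: "fps_nth T j = (if j < n then a j else 0)" for j unfolding T_def by (rule Ptr_nth)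
    define S where "S = (\<Sum>i<p. T ^ (p - Suc i) * F ^ i)"
    have FT: "F ^ p - T ^ p = (F - T) * S" unfolding S_def by (rule power_diff_sumr2)
    have S0: "fps_nth S 0 = of_nat p"
    proof -
      have "fps_nth S 0 = (\<Sum>i<p. (fps_nth T 0) ^ (p - Suc i) * (fps_nth F 0) ^ i)"
        unfolding S_def fps_sum_nth by (simp add: fps_nth_power_0)
      also have "\<dots> = (\<Sum>i<p. 1)" using Tn[of 0] n0 F0 unfolding a_def by simp
      finally show ?thesis by simp
    qed
    have "fps_nth ((F - T) * S) n = (\<Sum>j=0..n. fps_nth (F - T) j * fps_nth S (n - j))"
      by (rule fps_mult_nth)
    also have "\<dots> = fps_nth (F - T) n * fps_nth S (n - n)"
      by (rule sum_single_top) (simp add: Tn a_def)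
    also have "\<dots> = a n * of_nat p" using S0 Tn[of n] unfolding a_def by simp
    finally have st1: "of_nat p * a n = fps_nth (F ^ p) n - fps_nth (T ^ p) n"
      using FT by (metis fps_sub_nth mult.commute)
    have fr: "CB 1 (T ^ p - (T oo fps_X ^ p))" unfolding T_def
      using frob[of n a] IHa E_rat unfolding a_def F_def by blast
    have st3: "fps_nth (T oo fps_X ^ p) n = fps_nth (F oo fps_X ^ p) n"
    proof -
      have "n div p < n" using n0 p2 by simp
      then show ?thesis using compose_Xpow_nth[OF p1, of T n] compose_Xpow_nth[OF p1, of F n] Tn
        unfolding a_def by simp
    qed
    define R where "R = (Exf (tt p (Suc N)) ^ p :: 'a fps)"
    have "fps_nth ((F oo fps_X ^ p) * fps_exp (of_nat p)) n = fps_nth (F ^ p * R) n"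
      unfolding F_def R_def dwork_identity[OF p1] ..
    also have "\<dots> = (\<Sum>j=0..n. fps_nth (F ^ p) j * fps_nth R (n - j))" by (rule fps_mult_nth)
    also have "\<dots> = fps_nth (F ^ p) n * fps_nth R (n - n)"
    proof (rule sum_single_top)
      fix j assume "j < n"
      then have "fps_nth R (n - j) = 0" unfolding R_def using less.prems
        by (intro R_nth[OF p1]) auto
      then show "fps_nth (F ^ p) j * fps_nth R (n - j) = 0" by simp
    qed
    also have "\<dots> = fps_nth (F ^ p) n" unfolding R_def by (simp add: R_nth0)
    finally have st4: "fps_nth ((F oo fps_X ^ p) * fps_exp (of_nat p)) n = fps_nth (F ^ p) n" .
    define G where "G = F oo fps_X ^ p"
    define s where "s = (\<Sum>j\<in>{0..n} - {n}. fps_nth G j * (of_nat p ^ (n - j) / of_nat (fact (n - j))))"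
    have "fps_nth (G * fps_exp (of_nat p)) n = (\<Sum>j=0..n. fps_nth G j * (of_nat p ^ (n - j) / of_nat (fact (n - j))))"
      unfolding fps_mult_nth by simp
    also have "\<dots> = fps_nth G n * (of_nat p ^ (n - n) / of_nat (fact (n - n))) + s"
      unfolding s_def by (rule sum.remove) auto
    finally have st5: "fps_nth (G * fps_exp (of_nat p)) n = fps_nth G n + s" by simp
    have Gj: "vge (fps_nth G j) 0" if "j < n" for j
    proof -
      have "j div p < n" using that by (meson div_le_dividend le_less_trans)
      then show ?thesis unfolding G_def compose_Xpow_nth[OF p1] using IHa[unfolded a_def] by simp
    qed
    have vs: "vge s 1" unfolding s_def
    proof (rule vge_sum)
      fix j assume "j \<in> {0..n} - {n}"
      then have j: "j < n" by auto
      have "vge (fps_nth G j * (of_nat p ^ (n - j) / of_nat (fact (n - j)))) (0 + 1)"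
        using j by (intro vge_mult Gj vge_pfact) auto
      then show "vge (fps_nth G j * (of_nat p ^ (n - j) / of_nat (fact (n - j)))) 1" by simp
    qed
    have "of_nat p * a n = s - fps_nth (T ^ p - (T oo fps_X ^ p)) n"
      using st1 st3 st4 st5 unfolding G_def by (simp add: algebra_simps)
    then have "vge (of_nat p * a n) (0 + 1)" using vs fr unfolding CB_def
      by (simp add: vge_diff)
    then show ?thesis using vge_cancel_p unfolding a_def F_def by blast
  qed
qed

definition LB :: "real \<Rightarrow> 'a fps \<Rightarrow> bool" where
  "LB g f \<longleftrightarrow> (\<forall>n. vge (fps_nth f n) (- (real n * g)))"

lemma LB_mult: assumes "LB g f" "LB g h" shows "LB g (f * h)"
  unfolding LB_def fps_mult_nth
proof (intro allI vge_sum)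
  fix n i :: nat assume i: "i \<in> {0..n}"
  have "vge (fps_nth f i * fps_nth h (n - i)) (- (real i * g) + - (real (n - i) * g))"
    using assms unfolding LB_def by (intro vge_mult) auto
  moreover have "- (real i * g) + - (real (n - i) * g) = - (real n * g)"
    using i by (simp add: of_nat_diff algebra_simps)
  ultimately show "vge (fps_nth f i * fps_nth h (n - i)) (- (real n * g))" by simp
qed

lemma LB_1: "LB g 1"
  unfolding LB_def by (simp add: fps_one_nth vge_1)

lemma LB_prod: "(\<And>i. i \<in> S \<Longrightarrow> LB g (f i)) \<Longrightarrow> LB g (prod f S)"
proof (induction S rule: infinite_finite_induct)
  case (insert x F) then show ?case by (simp add: LB_mult)
qed (auto simp: LB_1)

lemma gamma_ineq:
  fixes a :: real assumes a: "0 \<le> a"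
  shows "real k + 1 + real d + a \<le> real p ^ d * (real k + 1 + a)"
proof (induction d)
  case 0 then show ?case by simp
next
  case (Suc d)
  have p1: "real p \<ge> 2" using p2 by simp
  have pd: "real p ^ d \<ge> 1" using p1 by simp
  have K: "real k + 1 + a \<ge> 1" using a by simp
  define X where "X = real p ^ d * (real k + 1 + a)"
  have X1: "X \<ge> 1" unfolding X_def using mult_mono[OF pd K] by simp
  have eq: "real p ^ Suc d * (real k + 1 + a) = X * real p" unfolding X_def by (simp add: algebra_simps)
  have "X * real p \<ge> X * 2" using p1 X1 by (intro mult_left_mono) auto
  moreover have "real k + 1 + real d + a \<le> X" using Suc unfolding X_def .
  ultimately show ?case unfolding eq using X1 by linarith
qed

lemma LB_negtt:
  assumes j: "j \<ge> Suc k"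
  shows "LB ((real k + 1 + 1 / (real p - 1)) / real p ^ (k + 1)) (Exf (- tt p j) :: 'a fps)"
  unfolding LB_def
proof
  fix n
  define g where "g = (real k + 1 + 1 / (real p - 1)) / real p ^ (k + 1)"
  have p1: "p \<ge> 1" using p2 by simp
  have pp1: "real p - 1 > 0" using p2 by simp
  show "vge (fps_nth (Exf (- tt p j) :: 'a fps) n) (- (real n * ((real k + 1 + 1 / (real p - 1)) / real p ^ (k + 1))))"
  proof (cases "p ^ j dvd n")
    case False then show ?thesis unfolding Ex_negtt_nth[OF p1] by simp
  next
    case True
    then obtain t where nt: "n = p ^ j * t" by blast
    have td: "n div p ^ j = t" using nt p2 by simp
    define c where "c = (- (1 / of_nat (p ^ j)) :: 'a)"
    have vc: "vge c (- real j)"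
    proof -
      have "v (of_nat (p ^ j) :: 'a) = ereal (real j)" using v_p_power[of j] by simp
      then have "v (inverse (of_nat (p ^ j)) :: 'a) = ereal (- real j)" by (rule v_inv_ereal)
      then show ?thesis unfolding c_def vge_def vge_uminus by (simp add: divide_inverse v_uminus)
    qed
    have A: "vge (c ^ t * (1 / of_nat (fact t))) (real t * (- real j) + - (real t / (real p - 1)))"
      by (intro vge_mult vge_power vc vge_invfact)
    have B: "fps_nth (Exf (- tt p j) :: 'a fps) n = c ^ t * (1 / of_nat (fact t))"
      unfolding Ex_negtt_nth[OF p1] td c_def using True by simp
    have C: "real t * (- real j) + - (real t / (real p - 1)) \<ge> - (real n * g)"
    proof -
      obtain d where d: "j = Suc k + d" using j le_Suc_ex by blast
      have "real j + 1 / (real p - 1) \<le> real p ^ d * (real k + 1 + 1 / (real p - 1))"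
        using gamma_ineq[where a = "1 / (real p - 1)" and d = d and k = k] pp1 d by simp
      also have "\<dots> = real p ^ j * g"
      proof -
        have pj: "real p ^ j = real p ^ d * real p ^ (k + 1)" unfolding d by (simp add: power_add)
        have pk: "real p ^ (k + 1) \<noteq> 0" using p2 by simp
        show ?thesis unfolding g_def pj using pk by simp
      qed
      finally have "real t * (real j + 1 / (real p - 1)) \<le> real t * (real p ^ j * g)"
        by (intro mult_left_mono) auto
      moreover have "real n = real p ^ j * real t" using nt by simp
      ultimately show ?thesis by (simp add: algebra_simps)
    qed
    have "vge (fps_nth (Exf (- tt p j) :: 'a fps) n) (- (real n * g))"
      unfolding B by (rule vge_mono[OF A C])
    then show ?thesis unfolding g_def .
  qed
qed

lemma final_arith:
  fixes P q kk :: real assumes P: "P > 0" and q: "q > 1"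
  shows "1 / (P * (q - 1)) - (kk + 1 + 1 / (q - 1)) / (P * q ^ 2) = (q - kk) / (P * q ^ 2)"
proof -
  have q1: "q - 1 \<noteq> 0" using q by simp
  have q0: "q \<noteq> 0" using q by simp
  have P0: "P \<noteq> 0" using P by simp
  have D0: "P * q ^ 2 \<noteq> 0" using P0 q0 by simp
  have C: "q ^ 2 / (q - 1) - 1 / (q - 1) = q + 1"
  proof -
    have "q ^ 2 / (q - 1) - 1 / (q - 1) = (q ^ 2 - 1) / (q - 1)" by (simp add: diff_divide_distrib)
    also have "q ^ 2 - 1 = (q + 1) * (q - 1)" by (simp add: power2_eq_square algebra_simps)
    finally show ?thesis using q1 by simp
  qed
  have A: "1 / (P * (q - 1)) * (P * q ^ 2) = q ^ 2 / (q - 1)" using P0 q1 by (simp add: field_simps)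
  have B: "(kk + 1 + 1 / (q - 1)) / (P * q ^ 2) * (P * q ^ 2) = kk + 1 + 1 / (q - 1)" using D0 by simp
  have "(1 / (P * (q - 1)) - (kk + 1 + 1 / (q - 1)) / (P * q ^ 2)) * (P * q ^ 2) = q - kk"
    unfolding left_diff_distrib A B using C by linarith
  then show ?thesis using D0 by (simp add: eq_divide_eq)
qed

lemma theta_bound:
  assumes k1: "1 \<le> k" and vpi: "v \<pi> = ereal (1 / (real p ^ (k - 1) * (real p - 1)))"
  shows "vge (fps_nth (theta_series p k \<pi>) i) (real i * (real p - real k) / real p ^ (k + 1))"
proof -
  define N where "N = k + i"
  define g where "g = (real k + 1 + 1 / (real p - 1)) / real p ^ (k + 1)"
  define \<rho> where "\<rho> = 1 / (real p ^ (k - 1) * (real p - 1))"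
  have p1: "p \<ge> 1" using p2 by simp
  have g0: "g \<ge> 0" unfolding g_def using p2 by simp
  have iN: "i < p ^ Suc N"
  proof -
    have "i < 2 ^ i" by (rule less_exp)
    also have "(2::nat) ^ i \<le> p ^ i" using p2 by (intro power_mono) auto
    also have "p ^ i \<le> p ^ Suc N" unfolding N_def using p1 by (intro power_increasing) auto
    finally show ?thesis .
  qed
  define Q where "Q = (\<Prod>j\<in>{k<..N}. Exf (- tt p j) :: 'a fps)"
  have split: "E_series p k = (E_series p N * Q :: 'a fps)"
    unfolding Q_def N_def by (rule E_split[OF p1]) simp
  have LQ: "LB g Q" unfolding Q_def g_def
    by (intro LB_prod LB_negtt) auto
  have Ei: "vge (fps_nth (E_series p k :: 'a fps) i) (- (real i * g))"
    unfolding split fps_mult_nth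
  proof (rule vge_sum)
    fix j assume j: "j \<in> {0..i}"
    have "j < p ^ Suc N" using j iN by simp
    then have E1: "vge (fps_nth (E_series p N :: 'a fps) j) 0" by (rule E_integral)
    have Q1: "vge (fps_nth Q (i - j)) (- (real (i - j) * g))" using LQ unfolding LB_def by blast
    have "vge (fps_nth (E_series p N :: 'a fps) j * fps_nth Q (i - j)) (0 + - (real (i - j) * g))"
      by (rule vge_mult[OF E1 Q1])
    moreover have "0 + - (real (i - j) * g) \<ge> - (real i * g)"
      using g0 j by (simp add: mult_right_mono)
    ultimately show "vge (fps_nth (E_series p N :: 'a fps) j * fps_nth Q (i - j)) (- (real i * g))"
      using vge_mono by blast
  qed
  have th: "fps_nth (theta_series p k \<pi>) i = \<pi> ^ i * fps_nth (E_series p k) i"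
    unfolding theta_series_def by simp
  have vp: "vge \<pi> \<rho>" unfolding vge_def vpi \<rho>_def by simp
  have "vge (\<pi> ^ i * fps_nth (E_series p k) i) (real i * \<rho> + - (real i * g))"
    by (intro vge_mult vge_power vp Ei)
  moreover have "real i * \<rho> + - (real i * g) = real i * (real p - real k) / real p ^ (k + 1)"
  proof -
    have pk: "real p ^ (k + 1) = real p ^ (k - 1) * real p ^ 2"
      using k1 by (simp flip: power_add)
    have P: "real p ^ (k - 1) > 0" using p2 by simp
    have "\<rho> - g = (real p - real k) / (real p ^ (k - 1) * real p ^ 2)"
      unfolding \<rho>_def g_def pk using final_arith[OF P, of "real p" "real k"] p2 by simp
    then show ?thesis unfolding pk by (simp add: algebra_simps)
  qed
  ultimately show ?thesis unfolding th by simp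
qed

end

theorem mainTheorem5:
  fixes p m k :: nat and v :: "'a::field_char_0 \<Rightarrow> ereal" and \<pi> :: 'a
  assumes "prime p" and "m \<ge> 1" and "p > m" and "1 \<le> k" and "k \<le> m"
    and "p_valuation p v"
    and "(\<Sum>i\<le>k. \<pi> ^ (p ^ i) / of_nat (p ^ i)) = 0"
    and "v \<pi> = ereal (1 / (real p ^ (k - 1) * (real p - 1)))"
  shows "\<forall>i. v (fps_nth (theta_series p k \<pi>) i) \<ge> ereal (real i * (real p - real k) / real p ^ (k + 1))"
proof
  fix i
  interpret pval p v by (rule pval.intro) (fact assms(6), fact assms(1))
  show "v (fps_nth (theta_series p k \<pi>) i) \<ge> ereal (real i * (real p - real k) / real p ^ (k + 1))"
    using theta_bound[OF assms(4) assms(8), of i] unfolding vge_def .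
qed


end
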